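(* Let $K\subset\mathbb{R}^{2d}\setminus D_0$ be compact. Then there exist $\sqrt2<r<r'$, constants $c_1,c_2,\epsilon>0$ and a function $R\in C_0^\infty(\mathbb{R}^{2d})$ vanishing in a neighbourhood of $D_0$ such that, as symmetric $2d\times 2d$ matrices, $$\nabla^2R(\tilde x)\ge c_1 1_K(\tilde x)-c_2 1_{C_{r,r'}\setminus D_\epsilon}(\tilde x)\quad\text{for all }\tilde x\in\mathbb{R}^{2d}.$$
   Context: $\tilde x=(x_1,x_2)\in\mathbb{R}^{2d}$ with $x_i\in\mathbb{R}^d$; $D_\epsilon=\{\tilde x:|x_1-x_2|\le\epsilon\}$ (so $D_0$ is the diagonal); $C_{r,r'}=\{\tilde x:r\le|\tilde x|\le r'\}$; $\nabla^2R$ is the Hessian, and the scalars on the right are multiples of the identity matrix. *)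

theory Defs
  imports "HOL-Analysis.Analysis"
begin

definition dpart :: "'a::real_normed_vector \<Rightarrow> ('a \<Rightarrow> real) \<Rightarrow> 'a \<Rightarrow> real" where
  "dpart v f x = deriv (\<lambda>t. f (x + t *\<^sub>R v)) 0"

fun iter_dpart :: "'a::real_normed_vector list \<Rightarrow> ('a \<Rightarrow> real) \<Rightarrow> 'a \<Rightarrow> real" where
  "iter_dpart [] f = f"
| "iter_dpart (v # vs) f = dpart v (iter_dpart vs f)"

definition smooth_fun :: "('a::euclidean_space \<Rightarrow> real) \<Rightarrow> bool" where
  "smooth_fun f \<longleftrightarrow>
     (\<forall>vs. set vs \<subseteq> Basis \<longrightarrow>
        continuous_on UNIV (iter_dpart vs f) \<and>
        (\<forall>i\<in>Basis. \<forall>x. (\<lambda>t. iter_dpart vs f (x + t *\<^sub>R i)) differentiable (at 0)))"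

definition hess_entry :: "('a::euclidean_space \<Rightarrow> real) \<Rightarrow> 'a \<Rightarrow> 'a \<Rightarrow> 'a \<Rightarrow> real" where
  "hess_entry f x i j = dpart i (dpart j f) x"

definition hess_ge :: "('a::euclidean_space \<Rightarrow> real) \<Rightarrow> 'a \<Rightarrow> real \<Rightarrow> bool" where
  "hess_ge f x s \<longleftrightarrow>
     (\<forall>v::'a. (\<Sum>i\<in>Basis. \<Sum>j\<in>Basis. (v \<bullet> i) * hess_entry f x i j * (v \<bullet> j)) \<ge> s * (norm v)\<^sup>2)"

definition Dset :: "real \<Rightarrow> ('d::euclidean_space \<times> 'd) set" where
  "Dset e = {(x1, x2). norm (x1 - x2) \<le> e}"

definition Cann :: "real \<Rightarrow> real \<Rightarrow> ('a::real_normed_vector) set" where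
  "Cann r r' = {x. r \<le> norm x \<and> norm x \<le> r'}"

end

theory Submission
  imports Defs "HOL-Computational_Algebra.Polynomial"
begin

definition eq :: "real poly \<Rightarrow> real \<Rightarrow> real" where
  "eq q t = (if 0 < t then poly q (inverse t) * exp (- inverse t) else 0)"
definition qd :: "real poly \<Rightarrow> real poly" where
  "qd q = [:0,0,1:] * (q - pderiv q)"

lemma poly_exp_lim: "((\<lambda>y. poly p y * exp (- y)) \<longlongrightarrow> (0::real)) at_top"
proof -
  have lim: "((\<lambda>y. \<Sum>i\<le>degree p. coeff p i * (y ^ i / exp y)) \<longlongrightarrow> (\<Sum>i\<le>degree p. coeff p i * 0)) at_top"
    by (intro tendsto_sum tendsto_mult tendsto_const tendsto_power_div_exp_0)
  have eqf: "(\<lambda>y. \<Sum>i\<le>degree p. coeff p i * (y ^ i / exp y)) = (\<lambda>y. poly p y * exp (- y))"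
  proof (rule ext)
    fix y :: real
    have "(\<Sum>i\<le>degree p. coeff p i * (y ^ i / exp y)) = (\<Sum>i\<le>degree p. coeff p i * y ^ i) / exp y"
      by (simp add: sum_divide_distrib)
    then show "(\<Sum>i\<le>degree p. coeff p i * (y ^ i / exp y)) = poly p y * exp (- y)"
      by (simp add: poly_altdef exp_minus divide_inverse)
  qed
  have z: "(\<Sum>i\<le>degree p. coeff p i * 0) = (0::real)" by simp
  show ?thesis using lim unfolding eqf z .
qed

lemma eq_deriv: "(eq q has_real_derivative eq (qd q) t) (at t)"
proof (cases "t > 0")
  case True
  have tn: "t \<noteq> 0" using True by simp
  have di: "((\<lambda>x. inverse x) has_real_derivative - (inverse t ^ Suc (Suc 0))) (at t)"
    using DERIV_inverse[OF tn] .
  have d1: "((\<lambda>s. poly q (inverse s)) has_real_derivative poly (pderiv q) (inverse t) * - (inverse t ^ Suc (Suc 0))) (at t)"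
    by (rule DERIV_chain2[OF poly_DERIV di])
  have d2: "((\<lambda>s. - inverse s) has_real_derivative - (- (inverse t ^ Suc (Suc 0)))) (at t)"
    by (rule DERIV_minus[OF di])
  have d3: "((\<lambda>s. exp (- inverse s)) has_real_derivative exp (- inverse t) * - (- (inverse t ^ Suc (Suc 0)))) (at t)"
    by (rule DERIV_chain2[OF DERIV_exp d2])
  have d4: "((\<lambda>s. poly q (inverse s) * exp (- inverse s)) has_real_derivative
     poly (pderiv q) (inverse t) * - (inverse t ^ Suc (Suc 0)) * exp (- inverse t) + exp (- inverse t) * - (- (inverse t ^ Suc (Suc 0))) * poly q (inverse t)) (at t)"
    by (rule DERIV_mult[OF d1 d3])
  have e: "poly (pderiv q) (inverse t) * - (inverse t ^ Suc (Suc 0)) * exp (- inverse t) + exp (- inverse t) * - (- (inverse t ^ Suc (Suc 0))) * poly q (inverse t)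
      = eq (qd q) t"
    using True by (simp add: eq_def qd_def algebra_simps power2_eq_square)
  have d: "((\<lambda>s. poly q (inverse s) * exp (- inverse s)) has_real_derivative eq (qd q) t) (at t)"
    using d4 unfolding e .
  show ?thesis
    apply (rule has_field_derivative_transform_within_open[OF d, of "{0<..}"])
    using True by (auto simp: eq_def)
next
  case False
  show ?thesis
  proof (cases "t < 0")
    case True
    have d: "((\<lambda>s. 0) has_real_derivative eq (qd q) t) (at t)"
      using True by (simp add: eq_def)
    show ?thesis
      apply (rule has_field_derivative_transform_within_open[OF d, of "{..<0}"])
      using True by (auto simp: eq_def)
  next
    case False
    with \<open>\<not> t > 0\<close> have t0: "t = 0" by simp
    have "((\<lambda>y. (eq q y - eq q 0) / (y - 0)) \<longlongrightarrow> 0) (at 0)"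
    proof (rule filterlim_split_at)
      show "((\<lambda>y. (eq q y - eq q 0) / (y - 0)) \<longlongrightarrow> 0) (at_left 0)"
        apply (rule tendsto_eventually)
        by (auto simp: eventually_at_filter eq_def)
    next
      have "((\<lambda>y. poly ([:0,1:] * q) y * exp (- y)) \<longlongrightarrow> (0::real)) at_top"
        by (rule poly_exp_lim)
      then have "((\<lambda>y. poly ([:0,1:] * q) (inverse y) * exp (- inverse y)) \<longlongrightarrow> (0::real)) (at_right 0)"
        by (rule filterlim_compose) (rule filterlim_inverse_at_top_right)
      then show "((\<lambda>y. (eq q y - eq q 0) / (y - 0)) \<longlongrightarrow> 0) (at_right 0)"
        apply (rule Lim_transform_eventually)
        by (auto simp: eventually_at_filter eq_def field_simps)
    qed
    then show ?thesis using t0 by (simp add: has_field_derivative_iff eq_def)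
  qed
qed

lemma eq_cont: "continuous_on UNIV (eq q)"
  by (metis DERIV_isCont continuous_at_imp_continuous_on eq_deriv)

inductive P :: "('a::euclidean_space \<Rightarrow> real) \<Rightarrow> bool" where
  Pc: "P (\<lambda>x. c)"
| Plin: "bounded_linear l \<Longrightarrow> P l"
| Psq: "bounded_linear (L :: 'a \<Rightarrow> 'a) \<Longrightarrow> P (\<lambda>x. L x \<bullet> L x)"
| Padd: "P f \<Longrightarrow> P g \<Longrightarrow> P (\<lambda>x. f x + g x)"
| Pmul: "P f \<Longrightarrow> P g \<Longrightarrow> P (\<lambda>x. f x * g x)"
| Pinv: "P f \<Longrightarrow> (\<forall>x. f x > 0) \<Longrightarrow> P (\<lambda>x. inverse (f x))"
| Peq: "P f \<Longrightarrow> P (\<lambda>x. eq q (f x))"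

lemma P_main:
  "P f \<Longrightarrow> continuous_on UNIV f \<and>
     (\<forall>i. \<exists>g. P g \<and> (\<forall>x. ((\<lambda>t. f (x + t *\<^sub>R i)) has_real_derivative g x) (at 0)))"
proof (induction rule: P.induct)
  case (Pc c)
  then show ?case by (auto intro!: exI[of _ "\<lambda>x. 0"] P.Pc)
next
  case (Plin l)
  show ?case
  proof (intro conjI allI)
    show "continuous_on UNIV l" using Plin linear_continuous_on by blast
    fix i
    show "\<exists>g. P g \<and> (\<forall>x. ((\<lambda>t. l (x + t *\<^sub>R i)) has_real_derivative g x) (at 0))"
    proof (intro exI[of _ "\<lambda>x. l i"] conjI allI)
      show "P (\<lambda>x. l i)" by (rule P.Pc)
      fix x
      have e: "(\<lambda>t. l (x + t *\<^sub>R i)) = (\<lambda>t. l x + t * l i)"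
        using Plin by (simp add: linear_simps)
      show "((\<lambda>t. l (x + t *\<^sub>R i)) has_real_derivative l i) (at 0)"
        unfolding e by (auto intro!: derivative_eq_intros)
    qed
  qed
next
  case (Psq L)
  show ?case
  proof (intro conjI allI)
    show "continuous_on UNIV (\<lambda>x. L x \<bullet> L x)"
      using Psq by (intro continuous_intros linear_continuous_on) 
    fix i
    show "\<exists>g. P g \<and> (\<forall>x. ((\<lambda>t. L (x + t *\<^sub>R i) \<bullet> L (x + t *\<^sub>R i)) has_real_derivative g x) (at 0))"
    proof (intro exI[of _ "\<lambda>x. 2 * (L x \<bullet> L i)"] conjI allI)
      show "P (\<lambda>x. 2 * (L x \<bullet> L i))"
        apply (rule P.Plin)
        using Psq by (intro bounded_linear_intros bounded_linear_compose[OF bounded_linear_inner_left])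
      fix x
      have e: "(\<lambda>t. L (x + t *\<^sub>R i) \<bullet> L (x + t *\<^sub>R i)) = (\<lambda>t. L x \<bullet> L x + 2 * t * (L x \<bullet> L i) + t^2 * (L i \<bullet> L i))"
        using Psq by (auto simp: linear_simps inner_add inner_commute power2_eq_square algebra_simps)
      show "((\<lambda>t. L (x + t *\<^sub>R i) \<bullet> L (x + t *\<^sub>R i)) has_real_derivative 2 * (L x \<bullet> L i)) (at 0)"
        unfolding e by (auto intro!: derivative_eq_intros)
    qed
  qed
next
  case (Padd f g)
  show ?case
  proof (intro conjI allI)
    show "continuous_on UNIV (\<lambda>x. f x + g x)" using Padd by (intro continuous_intros) auto
    fix i
    obtain f1 where f1: "P f1" "\<And>x. ((\<lambda>t. f (x + t *\<^sub>R i)) has_real_derivative f1 x) (at 0)" using Padd by blast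
    obtain g1 where g1: "P g1" "\<And>x. ((\<lambda>t. g (x + t *\<^sub>R i)) has_real_derivative g1 x) (at 0)" using Padd by blast
    show "\<exists>h. P h \<and> (\<forall>x. ((\<lambda>t. f (x + t *\<^sub>R i) + g (x + t *\<^sub>R i)) has_real_derivative h x) (at 0))"
      by (intro exI[of _ "\<lambda>x. f1 x + g1 x"] conjI allI P.Padd f1 g1 DERIV_add)
  qed
next
  case (Pmul f g)
  show ?case
  proof (intro conjI allI)
    show "continuous_on UNIV (\<lambda>x. f x * g x)" using Pmul by (intro continuous_intros) auto
    fix i
    obtain f1 where f1: "P f1" "\<And>x. ((\<lambda>t. f (x + t *\<^sub>R i)) has_real_derivative f1 x) (at 0)" using Pmul by blast
    obtain g1 where g1: "P g1" "\<And>x. ((\<lambda>t. g (x + t *\<^sub>R i)) has_real_derivative g1 x) (at 0)" using Pmul by blast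
    show "\<exists>h. P h \<and> (\<forall>x. ((\<lambda>t. f (x + t *\<^sub>R i) * g (x + t *\<^sub>R i)) has_real_derivative h x) (at 0))"
    proof (intro exI[of _ "\<lambda>x. f1 x * g x + f x * g1 x"] conjI allI)
      show "P (\<lambda>x. f1 x * g x + f x * g1 x)" using f1 g1 Pmul by (intro P.Padd P.Pmul) auto
      fix x
      show "((\<lambda>t. f (x + t *\<^sub>R i) * g (x + t *\<^sub>R i)) has_real_derivative f1 x * g x + f x * g1 x) (at 0)"
        using DERIV_mult[OF f1(2) g1(2), of x x] by (simp add: mult.commute)
    qed
  qed
next
  case (Pinv f)
  show ?case
  proof (intro conjI allI)
    show "continuous_on UNIV (\<lambda>x. inverse (f x))" using Pinv
      by (intro continuous_on_inverse) (auto simp: less_imp_neq[symmetric])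
    fix i
    obtain f1 where f1: "P f1" "\<And>x. ((\<lambda>t. f (x + t *\<^sub>R i)) has_real_derivative f1 x) (at 0)" using Pinv by blast
    show "\<exists>h. P h \<and> (\<forall>x. ((\<lambda>t. inverse (f (x + t *\<^sub>R i))) has_real_derivative h x) (at 0))"
    proof (intro exI[of _ "\<lambda>x. (- 1) * f1 x * inverse (f x) * inverse (f x)"] conjI allI)
      show "P (\<lambda>x. (- 1) * f1 x * inverse (f x) * inverse (f x))"
        using f1 Pinv by (intro P.Pmul P.Pc P.Pinv) auto
      fix x
      have "f x \<noteq> 0" using Pinv(2) by (metis less_irrefl)
      then show "((\<lambda>t. inverse (f (x + t *\<^sub>R i))) has_real_derivative (- 1) * f1 x * inverse (f x) * inverse (f x)) (at 0)"
        using DERIV_inverse_fun[OF f1(2), of x] by (simp add: power2_eq_square mult.assoc)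
    qed
  qed
next
  case (Peq f q)
  show ?case
  proof (intro conjI allI)
    show "continuous_on UNIV (\<lambda>x. eq q (f x))" using Peq
      by (intro continuous_on_compose2[OF eq_cont]) auto
    fix i
    obtain f1 where f1: "P f1" "\<And>x. ((\<lambda>t. f (x + t *\<^sub>R i)) has_real_derivative f1 x) (at 0)" using Peq by blast
    show "\<exists>h. P h \<and> (\<forall>x. ((\<lambda>t. eq q (f (x + t *\<^sub>R i))) has_real_derivative h x) (at 0))"
    proof (intro exI[of _ "\<lambda>x. eq (qd q) (f x) * f1 x"] conjI allI)
      show "P (\<lambda>x. eq (qd q) (f x) * f1 x)" using f1 Peq by (intro P.Pmul P.Peq) auto
      fix x
      show "((\<lambda>t. eq q (f (x + t *\<^sub>R i))) has_real_derivative eq (qd q) (f x) * f1 x) (at 0)"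
        using DERIV_chain2[OF eq_deriv f1(2)] by simp
    qed
  qed
qed

lemma P_iter: "P f \<Longrightarrow> P (iter_dpart vs f)"
proof (induction vs)
  case Nil then show ?case by simp
next
  case (Cons v vs)
  then have "P (iter_dpart vs f)" by blast
  then obtain g where g: "P g" "\<And>x. ((\<lambda>t. iter_dpart vs f (x + t *\<^sub>R v)) has_real_derivative g x) (at 0)"
    using P_main by blast
  have "dpart v (iter_dpart vs f) = g"
    by (rule ext) (simp add: dpart_def DERIV_imp_deriv[OF g(2)])
  then show ?case using g(1) by simp
qed

lemma P_smooth: "P f \<Longrightarrow> smooth_fun f"
  unfolding smooth_fun_def
proof (intro allI impI conjI ballI)
  fix vs :: "'a list" and i x
  assume "P f"
  then have "P (iter_dpart vs f)" by (rule P_iter)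
  then show "continuous_on UNIV (iter_dpart vs f)" using P_main by blast
  from \<open>P (iter_dpart vs f)\<close> obtain g where
    "((\<lambda>t. iter_dpart vs f (x + t *\<^sub>R i)) has_real_derivative g x) (at 0)"
    using P_main by blast
  then show "(\<lambda>t. iter_dpart vs f (x + t *\<^sub>R i)) differentiable (at 0)"
    using real_differentiable_def by blast
qed


lemma dpart_local:
  assumes "open U" "\<forall>y\<in>U. f y = g y" "x \<in> U"
  shows "dpart v f x = dpart v g x"
proof -
  have o: "open ((\<lambda>t::real. x + t *\<^sub>R v) -` U)"
    by (rule continuous_open_vimage) (auto intro!: continuous_intros assms(1))
  have "eventually (\<lambda>t. (\<lambda>t::real. x + t *\<^sub>R v) t \<in> U) (nhds 0)"
    using eventually_nhds_in_open[OF o] assms(3) by simp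
  then have "eventually (\<lambda>t. f (x + t *\<^sub>R v) = g (x + t *\<^sub>R v)) (nhds 0)"
    by eventually_elim (use assms(2) in auto)
  then show ?thesis unfolding dpart_def by (rule deriv_cong_ev) simp
qed

lemma hess_local:
  assumes "open U" "\<forall>y\<in>U. f y = g y" "x \<in> U"
  shows "hess_entry f x i j = hess_entry g x i j"
  unfolding hess_entry_def
  apply (rule dpart_local[OF assms(1) _ assms(3)])
  using dpart_local[OF assms(1,2)] by blast

lemma hess_zero:
  assumes "open U" "\<forall>y\<in>U. f y = 0" "x \<in> U"
  shows "hess_entry f x i j = 0"
proof -
  have "hess_entry f x i j = hess_entry (\<lambda>_. 0) x i j"
    using hess_local[OF assms(1) _ assms(3), of f "\<lambda>_. 0"] assms(2) by simp
  also have "\<dots> = 0" by (simp add: hess_entry_def dpart_def)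
  finally show ?thesis .
qed

lemma dpart_deriv:
  assumes "(f has_derivative Df) (at y)"
  shows "dpart v f y = Df v"
proof -
  have l: "linear Df" using assms has_derivative_linear by blast
  have "((\<lambda>t::real. f (y + t *\<^sub>R v)) has_derivative (\<lambda>t. Df (t *\<^sub>R v))) (at 0)"
    apply (rule has_derivative_compose[of "\<lambda>t. y + t *\<^sub>R v" "\<lambda>t. t *\<^sub>R v", simplified])
     apply (auto intro!: derivative_eq_intros)
    using assms by simp
  moreover have "(\<lambda>t. Df (t *\<^sub>R v)) = (*) (Df v)"
    using l by (auto simp: linear_cmul)
  ultimately have "((\<lambda>t::real. f (y + t *\<^sub>R v)) has_real_derivative Df v) (at 0)"
    by (simp add: has_field_derivative_def)
  then show ?thesis unfolding dpart_def by (rule DERIV_imp_deriv)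
qed

lemma lin_sum:
  fixes l :: "'a::euclidean_space \<Rightarrow> real"
  assumes "linear l"
  shows "(\<Sum>i\<in>Basis. (v \<bullet> i) * l i) = l v"
proof -
  have "l v = l (\<Sum>i\<in>Basis. (v \<bullet> i) *\<^sub>R i)" by (simp add: euclidean_representation)
  also have "\<dots> = (\<Sum>i\<in>Basis. (v \<bullet> i) * l i)"
    using assms by (simp add: linear_sum linear_cmul)
  finally show ?thesis by simp
qed

lemma hess_form:
  fixes f :: "'a::euclidean_space \<Rightarrow> real"
  assumes d1: "\<And>y. (f has_derivative Df y) (at y)"
    and d2: "\<And>w. ((\<lambda>y. Df y w) has_derivative (\<lambda>k. D2 k w)) (at x)"
    and sym: "\<And>k w. D2 k w = D2 w k"
  shows "(\<Sum>i\<in>Basis. \<Sum>j\<in>Basis. (v \<bullet> i) * hess_entry f x i j * (v \<bullet> j)) = D2 v v"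
proof -
  have dp: "\<And>j. dpart j f = (\<lambda>y. Df y j)"
    by (rule ext) (rule dpart_deriv[OF d1])
  have he: "\<And>i j. hess_entry f x i j = D2 i j"
    unfolding hess_entry_def dp by (rule dpart_deriv[OF d2])
  have lin: "\<And>w. linear (\<lambda>k. D2 k w)" using d2 has_derivative_linear by blast
  have lin2: "\<And>w. linear (\<lambda>k. D2 w k)" using lin sym by simp
  have "(\<Sum>i\<in>Basis. \<Sum>j\<in>Basis. (v \<bullet> i) * hess_entry f x i j * (v \<bullet> j))
      = (\<Sum>j\<in>Basis. (v \<bullet> j) * (\<Sum>i\<in>Basis. (v \<bullet> i) * D2 i j))"
    unfolding he by (subst sum.swap) (simp add: sum_distrib_left algebra_simps)
  also have "\<dots> = (\<Sum>j\<in>Basis. (v \<bullet> j) * D2 v j)"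
    using lin_sum[OF lin] by simp
  also have "\<dots> = D2 v v" using lin_sum[OF lin2] by simp
  finally show ?thesis .
qed

definition hh :: "real \<Rightarrow> real \<Rightarrow> real" where "hh d s = eq 1 ((s - d) / 16) / 256"
definition hh1 :: "real \<Rightarrow> real \<Rightarrow> real" where "hh1 d s = eq (qd 1) ((s - d) / 16) / 4096"
definition hh2 :: "real \<Rightarrow> real \<Rightarrow> real" where "hh2 d s = eq (qd (qd 1)) ((s - d) / 16) / 65536"

lemma hh_deriv: "DERIV (hh d) s :> hh1 d s"
proof -
  have "((\<lambda>s. eq 1 ((s - d) / 16)) has_real_derivative eq (qd 1) ((s - d) / 16) * (1/16)) (at s)"
    by (rule DERIV_chain2[OF eq_deriv]) (auto intro!: derivative_eq_intros)
  then show ?thesis unfolding hh_def hh1_def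
    by (auto intro!: derivative_eq_intros simp: field_simps)
qed

lemma hh1_deriv: "DERIV (hh1 d) s :> hh2 d s"
proof -
  have "((\<lambda>s. eq (qd 1) ((s - d) / 16)) has_real_derivative eq (qd (qd 1)) ((s - d) / 16) * (1/16)) (at s)"
    by (rule DERIV_chain2[OF eq_deriv]) (auto intro!: derivative_eq_intros)
  then show ?thesis unfolding hh1_def hh2_def
    by (auto intro!: derivative_eq_intros simp: field_simps)
qed

lemma poly_qd1: "poly (qd 1) y = y^2"
  by (simp add: qd_def power2_eq_square)
lemma poly_qd2: "poly (qd (qd 1)) y = y^2 * (y^2 - 2*y)"
  by (simp add: qd_def power2_eq_square pderiv_pCons algebra_simps)

lemma sq_le_exp: "(y::real) \<ge> 0 \<Longrightarrow> y^2 \<le> exp y"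
proof -
  assume y: "y \<ge> 0"
  have "1 + y/2 + (y/2)^2/2 \<le> exp (y/2)" using exp_lower_Taylor_quadratic[of "y/2"] y by simp
  moreover have "y \<le> 1 + y/2 + (y/2)^2/2"
  proof -
    have h: "0 \<le> (y-2)*(y-2)" by simp
    show ?thesis using h by (simp add: power2_eq_square algebra_simps)
  qed
  ultimately have "y \<le> exp (y/2)" by linarith
  then have "y^2 \<le> (exp (y/2))^2" using y by (intro power_mono) auto
  also have "\<dots> = exp y" by (simp add: exp_double[symmetric])
  finally show ?thesis .
qed

lemma hh_nonneg: "hh d s \<ge> 0" by (simp add: hh_def eq_def)
lemma hh1_nonneg: "hh1 d s \<ge> 0" by (simp add: hh1_def eq_def poly_qd1)
lemma hh_zero: "s \<le> d \<Longrightarrow> hh d s = 0" by (simp add: hh_def eq_def)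
lemma hh_pos: "s > d \<Longrightarrow> hh d s > 0" by (simp add: hh_def eq_def)
lemma hh1_pos: "s > d \<Longrightarrow> hh1 d s > 0" by (simp add: hh1_def eq_def poly_qd1)
lemma hh1_le: "hh1 d s \<le> 1/4096"
proof -
  have "eq (qd 1) t \<le> 1" for t
  proof (cases "t > 0")
    case True
    have "(inverse t)^2 \<le> exp (inverse t)" using True by (intro sq_le_exp) simp
    then have "(inverse t)^2 * exp (- inverse t) \<le> 1"
      by (simp add: exp_minus divide_inverse[symmetric] divide_le_eq)
    then show ?thesis using True by (simp add: eq_def poly_qd1)
  qed (simp add: eq_def)
  then show ?thesis by (simp add: hh1_def)
qed
lemma hh2_nonneg: "s - d \<le> 8 \<Longrightarrow> hh2 d s \<ge> 0"
proof -
  assume a: "s - d \<le> 8"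
  show ?thesis
  proof (cases "(s - d)/16 > 0")
    case True
    define t where "t = (s - d) / 16"
    have t: "0 < t" "t \<le> 1/2" using True a by (auto simp: t_def)
    then have "inverse t \<ge> 2"
      by (metis le_imp_inverse_le inverse_eq_divide inverse_inverse_eq one_divide_eq_0_iff t(1) zero_less_divide_1_iff)
    then have "poly (qd (qd 1)) (inverse t) \<ge> 0"
      unfolding poly_qd2 using t(1) by (intro mult_nonneg_nonneg) (auto simp: power2_eq_square intro!: mult_right_mono)
    then show ?thesis using t by (simp add: hh2_def eq_def t_def[symmetric])
  qed (simp add: hh2_def eq_def)
qed

definition pp :: "'b::euclidean_space \<times> 'b \<Rightarrow> 'b" where "pp y = fst y - snd y"
definition qq :: "'b::euclidean_space \<times> 'b \<Rightarrow> 'b" where "qq y = fst y + snd y"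

lemma pp_deriv[derivative_intros]: "(pp has_derivative pp) (at y within s)"
  unfolding pp_def[abs_def] by (auto intro!: derivative_eq_intros)
lemma qq_deriv[derivative_intros]: "(qq has_derivative qq) (at y within s)"
  unfolding qq_def[abs_def] by (auto intro!: derivative_eq_intros)

lemma hh_hd[derivative_intros]: "(g has_derivative g') (at x within s) \<Longrightarrow>
   ((\<lambda>x. hh d (g x)) has_derivative (\<lambda>y. g' y * hh1 d (g x))) (at x within s)"
  by (rule DERIV_compose_FDERIV[OF hh_deriv])
lemma hh1_hd[derivative_intros]: "(g has_derivative g') (at x within s) \<Longrightarrow>
   ((\<lambda>x. hh1 d (g x)) has_derivative (\<lambda>y. g' y * hh2 d (g x))) (at x within s)"
  by (rule DERIV_compose_FDERIV[OF hh1_deriv])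

definition FF :: "real \<Rightarrow> 'b::euclidean_space \<times> 'b \<Rightarrow> real" where
  "FF d y = hh d (pp y \<bullet> pp y) + (hh d (pp y \<bullet> pp y))^2 * (qq y \<bullet> qq y)"

definition DF :: "real \<Rightarrow> 'b::euclidean_space \<times> 'b \<Rightarrow> 'b \<times> 'b \<Rightarrow> real" where
  "DF d y w = 2 * hh1 d (pp y \<bullet> pp y) * (pp y \<bullet> pp w)
     + 4 * hh d (pp y \<bullet> pp y) * hh1 d (pp y \<bullet> pp y) * (pp y \<bullet> pp w) * (qq y \<bullet> qq y)
     + 2 * (hh d (pp y \<bullet> pp y))^2 * (qq y \<bullet> qq w)"

definition D2 :: "real \<Rightarrow> 'b::euclidean_space \<times> 'b \<Rightarrow> 'b \<times> 'b \<Rightarrow> 'b \<times> 'b \<Rightarrow> real" where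
  "D2 d y k w = (let S = pp y \<bullet> pp y; Q = qq y \<bullet> qq y; h = hh d S; h1 = hh1 d S; h2 = hh2 d S in
     4 * h2 * (pp y \<bullet> pp k) * (pp y \<bullet> pp w) + 2 * h1 * (pp k \<bullet> pp w)
     + 8 * Q * (h1^2 + h * h2) * (pp y \<bullet> pp k) * (pp y \<bullet> pp w) + 4 * h * h1 * Q * (pp k \<bullet> pp w)
     + 8 * h * h1 * (pp y \<bullet> pp w) * (qq y \<bullet> qq k) + 8 * h * h1 * (qq y \<bullet> qq w) * (pp y \<bullet> pp k)
     + 2 * h^2 * (qq k \<bullet> qq w))"

lemma FF_deriv: "(FF d has_derivative DF d y) (at y)"
  unfolding FF_def[abs_def]
  apply (rule has_derivative_eq_rhs)
   apply (rule derivative_eq_intros refl)+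
  apply (rule ext)
  apply (simp add: DF_def inner_commute algebra_simps power2_eq_square)
  done

lemma DF_deriv: "((\<lambda>y. DF d y w) has_derivative (\<lambda>k. D2 d y k w)) (at y)"
  unfolding DF_def
  apply (rule has_derivative_eq_rhs)
   apply (rule derivative_eq_intros refl)+
  apply (rule ext)
  apply (simp add: D2_def Let_def inner_commute algebra_simps power2_eq_square)
  done

lemma D2_sym: "D2 d y k w = D2 d y w k"
  by (simp add: D2_def Let_def inner_commute algebra_simps)


lemma pq_sum: "pp y \<bullet> pp y + qq y \<bullet> qq y = 2 * (y \<bullet> y)"
  by (cases y) (simp add: pp_def qq_def inner_diff inner_add inner_commute algebra_simps)

lemma D2_lower:
  assumes S8: "pp y \<bullet> pp y < 8" and Q8: "qq y \<bullet> qq y < 8" and d: "d > 0"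
  shows "D2 d y v v \<ge> hh1 d (pp y \<bullet> pp y) * (pp v \<bullet> pp v) + (hh d (pp y \<bullet> pp y))^2 * (qq v \<bullet> qq v)"
proof -
  define S where "S = pp y \<bullet> pp y"
  define Q where "Q = qq y \<bullet> qq y"
  define h where "h = hh d S"
  define h1 where "h1 = hh1 d S"
  define h2 where "h2 = hh2 d S"
  define pa where "pa = pp y \<bullet> pp v"
  define qb where "qb = qq y \<bullet> qq v"
  define A where "A = pp v \<bullet> pp v"
  define B where "B = qq v \<bullet> qq v"
  have h0: "h \<ge> 0" by (simp add: h_def hh_nonneg)
  have h10: "h1 \<ge> 0" by (simp add: h1_def hh1_nonneg)
  have h1s: "h1 \<le> 1/4096" unfolding h1_def by (rule hh1_le)
  have h20: "h2 \<ge> 0" unfolding h2_def using S8 d by (intro hh2_nonneg) (simp add: S_def)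
  have S0: "S \<ge> 0" "Q \<ge> 0" "A \<ge> 0" "B \<ge> 0" by (simp_all add: S_def Q_def A_def B_def)
  have S8': "S \<le> 8" "Q \<le> 8" using S8 Q8 by (simp_all add: S_def Q_def)
  have cs1: "pa^2 \<le> S * A" unfolding pa_def S_def A_def by (rule Cauchy_Schwarz_ineq)
  have cs2: "qb^2 \<le> Q * B" unfolding qb_def Q_def B_def by (rule Cauchy_Schwarz_ineq)
  have c3: "pa^2 * qb^2 \<le> 64 * (A * B)"
  proof -
    have "pa^2 * qb^2 \<le> (S * A) * (Q * B)"
      using cs1 cs2 S0 by (intro mult_mono) auto
    also have "\<dots> = (S * Q) * (A * B)" by simp
    also have "\<dots> \<le> 64 * (A * B)"
    proof (rule mult_right_mono)
      show "S * Q \<le> 64" using mult_mono[OF S8'(1) S8'(2)] S0 by simp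
    qed (use S0 in simp)
    finally show ?thesis .
  qed
  define X where "X = h1 * A"
  define Y where "Y = h^2 * B"
  define cr where "cr = 16 * h * h1 * pa * qb"
  have X0: "X \<ge> 0" "Y \<ge> 0" using h10 S0 by (simp_all add: X_def Y_def)
  have c4: "cr^2 \<le> 4 * X * Y"
  proof -
    have "cr^2 = 256 * (h^2 * h1^2) * (pa^2 * qb^2)" by (simp add: cr_def power_mult_distrib)
    also have "\<dots> \<le> 256 * (h^2 * h1^2) * (64 * (A * B))"
      using c3 by (intro mult_left_mono) auto
    also have "\<dots> = (16384 * h1) * (h1 * h^2 * A * B)" by (simp add: power2_eq_square)
    also have "\<dots> \<le> 4 * (h1 * h^2 * A * B)"
      using h1s h10 S0 by (intro mult_right_mono) auto
    also have "\<dots> = 4 * X * Y" by (simp add: X_def Y_def)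
    finally show ?thesis .
  qed
  have c5: "4 * X * Y \<le> (X + Y)^2"
  proof -
    have e: "(X + Y)^2 = (X - Y)^2 + 4 * X * Y" unfolding power2_eq_square by algebra
    have "0 \<le> (X - Y)^2" by (rule zero_le_power2)
    then show ?thesis unfolding e by linarith
  qed
  have c6: "\<bar>cr\<bar> \<le> X + Y"
  proof -
    have a: "\<bar>cr\<bar>^2 = cr^2" by (rule power2_abs)
    have "\<bar>cr\<bar>^2 \<le> (X + Y)^2" unfolding a using c4 c5 by linarith
    moreover have "0 \<le> X + Y" using X0 by simp
    ultimately show ?thesis by (rule power2_le_imp_le)
  qed
  have D2e: "D2 d y v v = (X + Y + cr) + (X + Y) + 4 * h2 * pa^2 + 8 * Q * (h1^2 + h * h2) * pa^2 + 4 * h * h1 * Q * A"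
  proof -
    have "D2 d y v v = 4 * h2 * pa * pa + 2 * h1 * A + 8 * Q * (h1^2 + h * h2) * pa * pa + 4 * h * h1 * Q * A
       + 8 * h * h1 * pa * qb + 8 * h * h1 * qb * pa + 2 * h^2 * B"
      by (simp add: D2_def Let_def S_def Q_def h_def h1_def h2_def pa_def qb_def A_def B_def)
    also have "\<dots> = (X + Y + cr) + (X + Y) + 4 * h2 * pa^2 + 8 * Q * (h1^2 + h * h2) * pa^2 + 4 * h * h1 * Q * A"
      unfolding X_def Y_def cr_def power2_eq_square by algebra
    finally show ?thesis .
  qed
  have nn: "0 \<le> 4 * h2 * pa^2 + 8 * Q * (h1^2 + h * h2) * pa^2 + 4 * h * h1 * Q * A"
    using h0 h10 h20 S0 by (intro add_nonneg_nonneg mult_nonneg_nonneg) auto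
  have "X + Y + cr \<ge> 0" using c6 by linarith
  then have "D2 d y v v \<ge> X + Y" using D2e nn by linarith
  then show ?thesis by (simp add: X_def Y_def h1_def h_def S_def A_def B_def)
qed

lemma P_eqI: "P f \<Longrightarrow> f = g \<Longrightarrow> P g" by simp

lemma P_cmul: "P f \<Longrightarrow> P (\<lambda>x. c * f x)"
  using P.Pmul[OF P.Pc] by blast

lemma P_diff: "P f \<Longrightarrow> P g \<Longrightarrow> P (\<lambda>x. f x - g x)"
  by (rule P_eqI[OF P.Padd[OF _ P_cmul[of g "-1"]]]) auto

lemma P_norm2: "P (\<lambda>x::'a::euclidean_space. x \<bullet> x)"
  using P.Psq[of "\<lambda>x. x"] by (simp add: bounded_linear_ident)

lemma P_pp: "P (\<lambda>x::('b::euclidean_space \<times> 'b). pp x \<bullet> pp x)"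
proof (rule P_eqI)
  show "P (\<lambda>x::('b \<times> 'b). (fst x - snd x, 0::'b) \<bullet> (fst x - snd x, 0))"
    by (rule P.Psq) (auto intro!: bounded_linear_intros bounded_linear_Pair bounded_linear_fst bounded_linear_snd)
qed (auto simp: pp_def)

lemma P_qq: "P (\<lambda>x::('b::euclidean_space \<times> 'b). qq x \<bullet> qq x)"
proof (rule P_eqI)
  show "P (\<lambda>x::('b \<times> 'b). (fst x + snd x, 0::'b) \<bullet> (fst x + snd x, 0))"
    by (rule P.Psq) (auto intro!: bounded_linear_intros bounded_linear_Pair bounded_linear_fst bounded_linear_snd)
qed (auto simp: qq_def)

lemma P_hh: "P g \<Longrightarrow> P (\<lambda>x. hh d (g x))"
proof -
  assume g: "P g"
  have "P (\<lambda>x. (1/256) * eq 1 ((1/16) * (g x - d)))"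
    by (intro P_cmul P.Peq P_diff g P.Pc)
  then show ?thesis by (rule P_eqI) (auto simp: hh_def)
qed

lemma P_FF: "P (FF d :: ('b::euclidean_space \<times> 'b) \<Rightarrow> real)"
proof -
  have "P (\<lambda>x::('b \<times> 'b). hh d (pp x \<bullet> pp x) + hh d (pp x \<bullet> pp x) * hh d (pp x \<bullet> pp x) * (qq x \<bullet> qq x))"
    by (intro P.Padd P.Pmul P_hh P_pp P_qq)
  then show ?thesis by (rule P_eqI) (auto simp: FF_def[abs_def] power2_eq_square)
qed

lemma eq1_nonneg: "eq 1 t \<ge> 0" by (simp add: eq_def)
lemma eq1_pos: "t > 0 \<Longrightarrow> eq 1 t > 0" by (simp add: eq_def)
lemma eq1_zero: "t \<le> 0 \<Longrightarrow> eq 1 t = 0" by (simp add: eq_def)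

lemma chi_pos: "T0 > 4 \<Longrightarrow> eq 1 (T0 - t) + eq 1 (t - 4) > 0"
proof (cases "t < T0")
  case True
  then show ?thesis using eq1_pos[of "T0 - t"] eq1_nonneg[of "t - 4"] by simp
next
  case False
  assume "T0 > 4"
  with False show ?thesis using eq1_pos[of "t - 4"] eq1_nonneg[of "T0 - t"] by simp
qed

lemma Dset_mem: "x \<in> Dset e \<longleftrightarrow> norm (fst x - snd x) \<le> e"
  by (cases x) (simp add: Dset_def)

lemma Cann_mem: "x \<in> Cann r r' \<longleftrightarrow> r \<le> norm x \<and> norm x \<le> r'"
  by (simp add: Cann_def)

lemma hh_cont: "continuous_on UNIV (hh d)"
  by (metis DERIV_isCont continuous_at_imp_continuous_on hh_deriv)
lemma hh1_cont: "continuous_on UNIV (hh1 d)"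
  by (metis DERIV_isCont continuous_at_imp_continuous_on hh1_deriv)

lemma form_lower:
  fixes H :: "'a::euclidean_space \<Rightarrow> 'a \<Rightarrow> real"
  shows "(\<Sum>i\<in>Basis. \<Sum>j\<in>Basis. (v \<bullet> i) * H i j * (v \<bullet> j)) \<ge> - (\<Sum>i\<in>Basis. \<Sum>j\<in>Basis. \<bar>H i j\<bar>) * (norm v)^2"
proof -
  have "\<And>i j. i \<in> Basis \<Longrightarrow> j \<in> Basis \<Longrightarrow> - (\<bar>H i j\<bar> * (norm v)^2) \<le> (v \<bullet> i) * H i j * (v \<bullet> j)"
  proof -
    fix i j :: 'a assume ij: "i \<in> Basis" "j \<in> Basis"
    have "\<bar>(v \<bullet> i) * H i j * (v \<bullet> j)\<bar> = \<bar>H i j\<bar> * (\<bar>v \<bullet> i\<bar> * \<bar>v \<bullet> j\<bar>)" by (simp add: abs_mult)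
    also have "\<dots> \<le> \<bar>H i j\<bar> * (norm v * norm v)"
      using ij by (intro mult_left_mono mult_mono Basis_le_norm) auto
    finally show "- (\<bar>H i j\<bar> * (norm v)^2) \<le> (v \<bullet> i) * H i j * (v \<bullet> j)"
      by (simp add: power2_eq_square)
  qed
  then have "(\<Sum>i\<in>Basis. \<Sum>j\<in>Basis. - (\<bar>H i j\<bar> * (norm v)^2)) \<le> (\<Sum>i\<in>Basis. \<Sum>j\<in>Basis. (v \<bullet> i) * H i j * (v \<bullet> j))"
    by (intro sum_mono) auto
  then show ?thesis by (simp add: sum_negf sum_distrib_right)
qed

theorem lemma5p3:
  fixes K :: "((real^'d) \<times> (real^'d)) set"
  assumes "compact K" and "K \<inter> Dset 0 = {}"
  shows "\<exists>r r' c1 c2 \<epsilon>. sqrt 2 < r \<and> r < r' \<and> c1 > 0 \<and> c2 > 0 \<and> \<epsilon> > 0 \<and>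
     (\<exists>R :: (real^'d) \<times> (real^'d) \<Rightarrow> real.
        smooth_fun R \<and>
        (\<exists>S. compact S \<and> (\<forall>x. x \<notin> S \<longrightarrow> R x = 0)) \<and>
        (\<exists>U. open U \<and> Dset 0 \<subseteq> U \<and> (\<forall>x\<in>U. R x = 0)) \<and>
        (\<forall>x. hess_ge R x (c1 * indicator K x - c2 * indicator (Cann r r' - Dset \<epsilon>) x)))"
proof -
  note cK = assms(1)
  define Sf :: "(real^'d) \<times> (real^'d) \<Rightarrow> real" where "Sf x = pp x \<bullet> pp x" for x
  have Sf_cont: "continuous_on UNIV Sf" unfolding Sf_def pp_def by (intro continuous_intros)
  have Kpos: "\<And>x. x \<in> K \<Longrightarrow> Sf x > 0"
  proof -
    fix x assume "x \<in> K"
    then have "x \<notin> Dset 0" using assms(2) by blast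
    then have "pp x \<noteq> 0" by (simp add: Dset_mem pp_def)
    then show "Sf x > 0" by (simp add: Sf_def)
  qed
  obtain m where m: "m > 0" "\<And>x. x \<in> K \<Longrightarrow> m \<le> Sf x"
  proof (cases "K = {}")
    case True then show ?thesis using that[of 1] by simp
  next
    case False
    obtain x0 where "x0 \<in> K" "\<forall>y\<in>K. Sf x0 \<le> Sf y"
      using continuous_attains_inf[OF cK False continuous_on_subset[OF Sf_cont]] by blast
    then show ?thesis using that[of "Sf x0"] Kpos by blast
  qed
  define d where "d = m / 2"
  define \<epsilon> where "\<epsilon> = sqrt m / 2"
  have d0: "d > 0" and e0: "\<epsilon> > 0" using m by (auto simp: d_def \<epsilon>_def)
  have e2: "\<epsilon>^2 = m / 4" using m by (simp add: \<epsilon>_def power_divide)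
  obtain B where B: "B \<ge> 0" "\<And>x. x \<in> K \<Longrightarrow> norm x \<le> B"
    using compact_imp_bounded[OF cK] unfolding bounded_iff by (meson norm_ge_zero order.trans)
  define T0 where "T0 = B^2 + 5"
  define r' where "r' = sqrt T0 + 1"
  have T04: "T0 > 4" unfolding T0_def using zero_le_power2[of B] by linarith
  have r'2: "r' > 2"
  proof -
    have "2 < sqrt T0" using T04 by (intro real_less_rsqrt) simp
    then show ?thesis unfolding r'_def by linarith
  qed
  have KB: "\<And>x. x \<in> K \<Longrightarrow> norm x < r'"
  proof -
    fix x assume "x \<in> K"
    have "B < sqrt T0" by (rule real_less_rsqrt) (simp add: T0_def)
    then show "norm x < r'" using B(2)[OF \<open>x \<in> K\<close>] unfolding r'_def by linarith
  qed
  define chi where "chi t = eq 1 (T0 - t) * inverse (eq 1 (T0 - t) + eq 1 (t - 4))" for t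
  define R :: "(real^'d) \<times> (real^'d) \<Rightarrow> real" where "R x = chi (x \<bullet> x) * FF d x" for x
  have PR: "P R"
  proof -
    have "P (\<lambda>x::(real^'d) \<times> (real^'d). eq 1 (T0 - x \<bullet> x) * inverse (eq 1 (T0 - x \<bullet> x) + eq 1 (x \<bullet> x - 4)) * FF d x)"
      apply (intro P.Pmul P.Peq P.Pinv P.Padd P_diff P.Pc P_norm2 P_FF)
      using chi_pos[OF T04] by blast
    then show ?thesis by (rule P_eqI) (auto simp: R_def[abs_def] chi_def)
  qed
  have smooth: "smooth_fun R" by (rule P_smooth[OF PR])
  have supp: "\<And>x. T0 < x \<bullet> x \<Longrightarrow> R x = 0"
    by (simp add: R_def chi_def eq1_zero)
  have suppS: "\<exists>S. compact S \<and> (\<forall>x. x \<notin> S \<longrightarrow> R x = 0)"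
  proof (intro exI[of _ "cball 0 (sqrt T0)"] conjI allI impI)
    show "compact (cball (0:: (real^'d) \<times> (real^'d)) (sqrt T0))" by simp
    fix x :: "(real^'d) \<times> (real^'d)" assume "x \<notin> cball 0 (sqrt T0)"
    then have "sqrt T0 < norm x" by simp
    then have "(sqrt T0)^2 < (norm x)^2" using T04 by (intro power_strict_mono) auto
    then have "T0 < x \<bullet> x" using T04 by (simp add: power2_norm_eq_inner)
    then show "R x = 0" by (rule supp)
  qed
  define U where "U = {x. Sf x < d}"
  have Uopen: "open U" unfolding U_def
    by (rule open_Collect_less) (use Sf_cont in auto)
  have RU: "\<forall>x\<in>U. R x = 0"
    by (auto simp: U_def R_def FF_def Sf_def hh_zero)
  have DU: "Dset 0 \<subseteq> U"
    using d0 by (auto simp: U_def Dset_mem Sf_def pp_def)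
  have DeU: "Dset \<epsilon> \<subseteq> U"
  proof
    fix x :: "(real^'d) \<times> (real^'d)" assume "x \<in> Dset \<epsilon>"
    then have "norm (pp x) \<le> \<epsilon>" by (simp add: Dset_mem pp_def)
    then have "(norm (pp x))^2 \<le> \<epsilon>^2" by (intro power_mono) auto
    then have "Sf x \<le> m / 4" unfolding e2 by (simp add: Sf_def power2_norm_eq_inner)
    then show "x \<in> U" using m by (simp add: U_def d_def)
  qed
  have KDe: "K \<inter> Dset \<epsilon> = {}"
  proof -
    have "x \<notin> K" if "x \<in> Dset \<epsilon>" for x :: "(real^'d) \<times> (real^'d)"
    proof
      assume "x \<in> K"
      then have "m \<le> Sf x" by (rule m)
      moreover have "x \<in> U" using DeU that by blast
      ultimately show False using m by (simp add: U_def d_def)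
    qed
    then show ?thesis by blast
  qed
  define gK where "gK x = min (hh1 d (Sf x)) ((hh d (Sf x))^2)" for x :: "(real^'d) \<times> (real^'d)"
  have gK_cont: "continuous_on UNIV gK"
    unfolding gK_def
    by (intro continuous_intros continuous_on_compose2[OF hh_cont Sf_cont] continuous_on_compose2[OF hh1_cont Sf_cont]) auto
  have gKpos: "\<And>x. x \<in> K \<Longrightarrow> gK x > 0"
  proof -
    fix x assume "x \<in> K"
    then have "Sf x > d" using m(2)[of x] m unfolding d_def by linarith
    then have "hh d (Sf x) > 0" "hh1 d (Sf x) > 0" by (simp_all add: hh_pos hh1_pos)
    then show "gK x > 0" by (simp add: gK_def)
  qed
  obtain mu where mu: "mu > 0" "\<And>x. x \<in> K \<Longrightarrow> mu \<le> gK x"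
  proof (cases "K = {}")
    case True then show ?thesis using that[of 1] by simp
  next
    case False
    obtain x0 where "x0 \<in> K" "\<forall>y\<in>K. gK x0 \<le> gK y"
      using continuous_attains_inf[OF cK False continuous_on_subset[OF gK_cont]] by blast
    then show ?thesis using that[of "gK x0"] gKpos by blast
  qed
  define c1 where "c1 = 2 * mu"
  define Hs where "Hs x = (\<Sum>i\<in>Basis. \<Sum>j\<in>Basis. \<bar>hess_entry R x i j\<bar>)" for x :: "(real^'d) \<times> (real^'d)"
  have hess_cont: "\<And>i j. i \<in> Basis \<Longrightarrow> j \<in> Basis \<Longrightarrow> continuous_on UNIV (\<lambda>x. hess_entry R x i j)"
  proof -
    fix i j :: "(real^'d) \<times> (real^'d)" assume "i \<in> Basis" "j \<in> Basis"
    then have "set [i, j] \<subseteq> Basis" by simp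
    then have "continuous_on UNIV (iter_dpart [i, j] R)" using smooth unfolding smooth_fun_def by blast
    moreover have "iter_dpart [i, j] R = (\<lambda>x. hess_entry R x i j)"
      by (rule ext) (simp add: hess_entry_def)
    ultimately show "continuous_on UNIV (\<lambda>x. hess_entry R x i j)" by simp
  qed
  have Hs_cont: "continuous_on UNIV Hs"
    unfolding Hs_def[abs_def] by (intro continuous_intros hess_cont) auto
  have cC: "compact (Cann 2 r' :: ((real^'d) \<times> (real^'d)) set)"
  proof -
    have "Cann 2 r' = cball (0::(real^'d) \<times> (real^'d)) r' - ball 0 2" by (auto simp: Cann_def)
    then show ?thesis by (simp add: compact_diff)
  qed
  obtain M where M: "M > 0" "\<And>x. x \<in> Cann 2 r' \<Longrightarrow> Hs x \<le> M"
  proof -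
    have "bounded (Hs ` Cann 2 r')"
      by (rule compact_imp_bounded[OF compact_continuous_image[OF continuous_on_subset[OF Hs_cont] cC]]) auto
    then obtain M where "M > 0" "\<forall>y\<in>Hs ` Cann 2 r'. norm y \<le> M" by (auto simp: bounded_pos)
    then show ?thesis using that[of M] by force
  qed
  define c2 where "c2 = M + c1 + 1"
  have c10: "c1 > 0" using mu by (simp add: c1_def)
  have c20: "c2 > 0" using M c10 by (simp add: c2_def)
  have hess: "hess_ge R x (c1 * indicator K x - c2 * indicator (Cann 2 r' - Dset \<epsilon>) x)" for x :: "(real^'d) \<times> (real^'d)"
  proof (cases "norm x < 2")
    case True
    have chi1: "\<And>y. y \<in> ball (0::(real^'d) \<times> (real^'d)) 2 \<Longrightarrow> R y = FF d y"
    proof -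
      fix y :: "(real^'d) \<times> (real^'d)" assume "y \<in> ball 0 2"
      then have "norm y < 2" by simp
      then have "(norm y)^2 < 2^2" by (intro power_strict_mono) auto
      then have yy: "y \<bullet> y < 4" by (simp add: power2_norm_eq_inner)
      then have "eq 1 (y \<bullet> y - 4) = 0" by (simp add: eq1_zero)
      moreover have "eq 1 (T0 - y \<bullet> y) > 0" using yy T04 by (intro eq1_pos) simp
      ultimately show "R y = FF d y" by (simp add: R_def chi_def)
    qed
    have xx: "x \<bullet> x < 4"
    proof -
      have "(norm x)^2 < 2^2" using True by (intro power_strict_mono) auto
      then show ?thesis by (simp add: power2_norm_eq_inner)
    qed
    have S8: "pp x \<bullet> pp x < 8" "qq x \<bullet> qq x < 8"
      using pq_sum[of x] xx inner_ge_zero[of "pp x"] inner_ge_zero[of "qq x"] by linarith+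
    have notC: "x \<notin> Cann 2 r'" using True by (simp add: Cann_mem)
    show ?thesis unfolding hess_ge_def
    proof
      fix v :: "(real^'d) \<times> (real^'d)"
      have "(\<Sum>i\<in>Basis. \<Sum>j\<in>Basis. (v \<bullet> i) * hess_entry R x i j * (v \<bullet> j))
          = (\<Sum>i\<in>Basis. \<Sum>j\<in>Basis. (v \<bullet> i) * hess_entry (FF d) x i j * (v \<bullet> j))"
        using hess_local[of "ball 0 2" R "FF d" x] chi1 True by simp
      also have "\<dots> = D2 d x v v"
        by (rule hess_form[OF FF_deriv DF_deriv D2_sym])
      finally have fe: "(\<Sum>i\<in>Basis. \<Sum>j\<in>Basis. (v \<bullet> i) * hess_entry R x i j * (v \<bullet> j)) = D2 d x v v" .
      have low: "D2 d x v v \<ge> hh1 d (pp x \<bullet> pp x) * (pp v \<bullet> pp v) + (hh d (pp x \<bullet> pp x))^2 * (qq v \<bullet> qq v)"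
        by (rule D2_lower[OF S8 d0])
      have vv: "pp v \<bullet> pp v + qq v \<bullet> qq v = 2 * (norm v)^2"
        using pq_sum[of v] by (simp add: power2_norm_eq_inner)
      have A0: "pp v \<bullet> pp v \<ge> 0" "qq v \<bullet> qq v \<ge> 0" by simp_all
      have hn: "hh1 d (pp x \<bullet> pp x) \<ge> 0" "(hh d (pp x \<bullet> pp x))^2 \<ge> 0" by (simp_all add: hh1_nonneg)
      show "(\<Sum>i\<in>Basis. \<Sum>j\<in>Basis. (v \<bullet> i) * hess_entry R x i j * (v \<bullet> j))
          \<ge> (c1 * indicator K x - c2 * indicator (Cann 2 r' - Dset \<epsilon>) x) * (norm v)^2"
      proof (cases "x \<in> K")
        case True
        have g: "mu \<le> hh1 d (pp x \<bullet> pp x)" "mu \<le> (hh d (pp x \<bullet> pp x))^2"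
          using mu(2)[OF True] by (simp_all add: gK_def Sf_def)
        have "mu * (pp v \<bullet> pp v) + mu * (qq v \<bullet> qq v) \<le>
              hh1 d (pp x \<bullet> pp x) * (pp v \<bullet> pp v) + (hh d (pp x \<bullet> pp x))^2 * (qq v \<bullet> qq v)"
          using g A0 by (intro add_mono mult_right_mono) auto
        then have "c1 * (norm v)^2 \<le> D2 d x v v" using low vv
          by (simp add: c1_def distrib_left[symmetric])
        then show ?thesis using True notC fe by simp
      next
        case False
        have "0 \<le> D2 d x v v" using low A0 hn by (smt (verit) mult_nonneg_nonneg)
        then show ?thesis using False notC fe by simp
      qed
    qed
  next
    case False
    note n2 = False
    show ?thesis
    proof (cases "norm x \<le> r'")
      case True
      then have xC: "x \<in> Cann 2 r'" using n2 by (simp add: Cann_mem)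
      show ?thesis
      proof (cases "x \<in> Dset \<epsilon>")
        case True
        have xU: "x \<in> U" using True DeU by blast
        have "x \<notin> K" using True KDe by blast
        show ?thesis unfolding hess_ge_def
          using hess_zero[OF Uopen RU xU] \<open>x \<notin> K\<close> True by simp
      next
        case False
        show ?thesis unfolding hess_ge_def
        proof
          fix v :: "(real^'d) \<times> (real^'d)"
          have fl: "(\<Sum>i\<in>Basis. \<Sum>j\<in>Basis. (v \<bullet> i) * hess_entry R x i j * (v \<bullet> j)) \<ge> - Hs x * (norm v)^2"
            unfolding Hs_def by (rule form_lower)
          have "c1 * indicator K x - c2 * indicator (Cann 2 r' - Dset \<epsilon>) x \<le> - Hs x"
            using xC False M(2)[OF xC] c10 by (auto simp: c2_def indicator_def)
          then have "(c1 * indicator K x - c2 * indicator (Cann 2 r' - Dset \<epsilon>) x) * (norm v)^2 \<le> - Hs x * (norm v)^2"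
            by (intro mult_right_mono) auto
          then show "(c1 * indicator K x - c2 * indicator (Cann 2 r' - Dset \<epsilon>) x) * (norm v)^2
             \<le> (\<Sum>i\<in>Basis. \<Sum>j\<in>Basis. (v \<bullet> i) * hess_entry R x i j * (v \<bullet> j))"
            using fl by linarith
        qed
      qed
    next
      case False
      define V where "V = {y::(real^'d) \<times> (real^'d). T0 < y \<bullet> y}"
      have Vo: "open V" unfolding V_def by (rule open_Collect_less) (auto intro: continuous_intros)
      have RV: "\<forall>y\<in>V. R y = 0" using supp by (auto simp: V_def)
      have xV: "x \<in> V"
      proof -
        have "sqrt T0 < norm x" using False by (simp add: r'_def)
        then have "(sqrt T0)^2 < (norm x)^2" using T04 by (intro power_strict_mono) auto
        then show ?thesis using T04 by (simp add: V_def power2_norm_eq_inner)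
      qed
      have "x \<notin> K" using KB[of x] False by linarith
      moreover have "x \<notin> Cann 2 r'" using False by (simp add: Cann_mem)
      ultimately show ?thesis unfolding hess_ge_def
        using hess_zero[OF Vo RV xV] by simp
    qed
  qed
  have s2: "sqrt 2 < (2::real)"
  proof -
    show ?thesis by (rule real_less_lsqrt) auto
  qed
  show ?thesis
    apply (rule exI[of _ 2], rule exI[of _ r'], rule exI[of _ c1], rule exI[of _ c2], rule exI[of _ \<epsilon>])
    using s2 r'2 c10 c20 e0 smooth suppS Uopen DU RU hess by blast
qed

end
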